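(* Let $V$ be a space. The following are equivalent: (i) $V$ is homothetic to $\langle 1,\tau\rangle_{\mathbb{Q}}$ for some $\tau$ with $|\tau|=1$; (ii) $V$ is homothetic to $\langle 1,\tau\rangle_{\mathbb{Q}}$ for some nonzero purely imaginary $\tau$; (iii) $V$ is homothetic to a space $V'$ with $V'=\overline{V'}$.
   Context: A space is a $2$-dimensional $\mathbb{Q}$-vector subspace $V\subset\mathbb{C}$ containing two $\mathbb{R}$-linearly independent vectors; $\langle 1,\tau\rangle_{\mathbb{Q}}=\mathbb{Q}+\mathbb{Q}\tau$. Spaces $V_1,V_2$ are homothetic if $V_2=\lambda V_1$ for some $\lambda\in\mathbb{C}^*$. $\overline{V}$ denotes the complex conjugate of $V$. *)

theory Defs
  imports "HOL-Analysis.Analysis"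
begin

definition qspan2 :: "complex \<Rightarrow> complex \<Rightarrow> complex set" where
  "qspan2 u w = {of_real (of_rat a) * u + of_real (of_rat b) * w | a b. True}"

definition R_indep :: "complex \<Rightarrow> complex \<Rightarrow> bool" where
  "R_indep u w \<longleftrightarrow> (\<forall>a b :: real. of_real a * u + of_real b * w = 0 \<longrightarrow> a = 0 \<and> b = 0)"

definition is_space :: "complex set \<Rightarrow> bool" where
  "is_space V \<longleftrightarrow>
     0 \<in> V \<and> (\<forall>x\<in>V. \<forall>y\<in>V. x + y \<in> V) \<and> (\<forall>q\<in>\<rat>. \<forall>x\<in>V. q * x \<in> V) \<and>
     (\<exists>u w. V = qspan2 u w \<and>
        (\<forall>a b. of_real (of_rat a) * u + of_real (of_rat b) * w = 0 \<longrightarrow> a = 0 \<and> b = 0)) \<and>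
     (\<exists>x\<in>V. \<exists>y\<in>V. R_indep x y)"

definition homothetic :: "complex set \<Rightarrow> complex set \<Rightarrow> bool" where
  "homothetic V1 V2 \<longleftrightarrow> (\<exists>c. c \<noteq> 0 \<and> V2 = (\<lambda>z. c * z) ` V1)"

end

theory Submission
  imports Defs
begin


lemma qspan2_mem: "x \<in> qspan2 u w \<longleftrightarrow> (\<exists>a b. x = of_real (of_rat a) * u + of_real (of_rat b) * w)"
  by (auto simp: qspan2_def)

lemma qspan2_scale: "(\<lambda>z. c*z) ` qspan2 u w = qspan2 (c*u) (c*w)"
proof
  show "(\<lambda>z. c*z) ` qspan2 u w \<subseteq> qspan2 (c*u) (c*w)"
  proof
    fix x assume "x \<in> (\<lambda>z. c*z) ` qspan2 u w"
    then obtain z where z: "z \<in> qspan2 u w" "x = c*z" by blast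
    then obtain a b where "x = c * (of_real (of_rat a) * u + of_real (of_rat b) * w)"
      by (auto simp: qspan2_mem)
    then have "x = of_real (of_rat a) * (c*u) + of_real (of_rat b) * (c*w)" by (simp add: algebra_simps)
    then show "x \<in> qspan2 (c*u) (c*w)" by (auto simp: qspan2_mem)
  qed
  show "qspan2 (c*u) (c*w) \<subseteq> (\<lambda>z. c*z) ` qspan2 u w"
  proof
    fix x assume "x \<in> qspan2 (c*u) (c*w)"
    then obtain a b where "x = of_real (of_rat a) * (c*u) + of_real (of_rat b) * (c*w)"
      by (auto simp: qspan2_mem)
    then have "x = c * (of_real (of_rat a) * u + of_real (of_rat b) * w)" by (simp add: algebra_simps)
    moreover have "of_real (of_rat a) * u + of_real (of_rat b) * w \<in> qspan2 u w" by (auto simp: qspan2_mem)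
    ultimately show "x \<in> (\<lambda>z. c*z) ` qspan2 u w" by blast
  qed
qed

lemma qspan2_sub:
  assumes "a \<in> qspan2 u w" "b \<in> qspan2 u w"
  shows "qspan2 a b \<subseteq> qspan2 u w"
proof
  fix x assume "x \<in> qspan2 a b"
  then obtain r s where x: "x = of_real (of_rat r) * a + of_real (of_rat s) * b" by (auto simp: qspan2_mem)
  obtain p q where a: "a = of_real (of_rat p) * u + of_real (of_rat q) * w" using assms(1) by (auto simp: qspan2_mem)
  obtain p' q' where b: "b = of_real (of_rat p') * u + of_real (of_rat q') * w" using assms(2) by (auto simp: qspan2_mem)
  have "x = of_real (of_rat (r*p+s*p')) * u + of_real (of_rat (r*q+s*q')) * w"
    unfolding x a b by (simp add: of_rat_mult of_rat_add algebra_simps)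
  then show "x \<in> qspan2 u w" by (auto simp: qspan2_mem)
qed

lemma homothetic_trans_scale:
  assumes "homothetic V A" "A = (\<lambda>z. d*z) ` B" "d \<noteq> 0"
  shows "homothetic V B"
proof -
  obtain c where c: "c \<noteq> 0" "A = (\<lambda>z. c*z) ` V" using assms(1) by (auto simp: homothetic_def)
  have "B = (\<lambda>z. inverse d * z) ` A" using assms(2,3) by (simp add: image_image mult.assoc[symmetric])
  also have "\<dots> = (\<lambda>z. (inverse d * c) * z) ` V" using c by (auto simp: image_image mult.assoc)
  finally show ?thesis unfolding homothetic_def using c assms(3) by (intro exI[of _ "inverse d * c"]) simp
qed

lemma real_dep:
  assumes "Im x = 0" "Im y = 0" shows "\<not> R_indep x y"
proof
  assume h: "R_indep x y"
  have "of_real (Re y) * x + of_real (- Re x) * y = 0"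
    using assms by (simp add: complex_eq_iff)
  with h have "Re x = 0 \<and> Re y = 0" unfolding R_indep_def by fastforce
  then have "x = 0" using assms by (simp add: complex_eq_iff)
  then have "of_real 1 * x + of_real 0 * y = 0" by simp
  with h show False unfolding R_indep_def by fastforce
qed

lemma imag_dep:
  assumes "Re x = 0" "Re y = 0" shows "\<not> R_indep x y"
proof
  assume h: "R_indep x y"
  have "of_real (Im y) * x + of_real (- Im x) * y = 0"
    using assms by (simp add: complex_eq_iff)
  with h have "Im x = 0 \<and> Im y = 0" unfolding R_indep_def by fastforce
  then have "x = 0" using assms by (simp add: complex_eq_iff)
  then have "of_real 1 * x + of_real 0 * y = 0" by simp
  with h show False unfolding R_indep_def by fastforce
qed

lemma R_indep_scale: "R_indep x y \<Longrightarrow> c \<noteq> 0 \<Longrightarrow> R_indep (c*x) (c*y)"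
  unfolding R_indep_def
  by (metis (no_types, lifting) mult.left_commute mult_eq_0_iff ring_class.ring_distribs(1))

lemma homothetic_Im:
  assumes "is_space V" "homothetic V (qspan2 1 \<tau>)"
  shows "Im \<tau> \<noteq> 0"
proof
  assume t: "Im \<tau> = 0"
  obtain x y where xy: "x \<in> V" "y \<in> V" "R_indep x y" using assms(1) by (auto simp: is_space_def)
  obtain c where c: "c \<noteq> 0" "qspan2 1 \<tau> = (\<lambda>z. c*z) ` V" using assms(2) by (auto simp: homothetic_def)
  have "c*x \<in> qspan2 1 \<tau>" "c*y \<in> qspan2 1 \<tau>" using c xy by auto
  moreover have "\<forall>z\<in>qspan2 1 \<tau>. Im z = 0" using t by (auto simp: qspan2_mem)
  ultimately have "Im (c*x) = 0" "Im (c*y) = 0" by blast+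
  with real_dep R_indep_scale[OF xy(3) c(1)] show False by blast
qed

lemma is_space_scale:
  assumes "is_space V" "c \<noteq> 0"
  shows "is_space ((\<lambda>z. c*z) ` V)"
proof -
  obtain u w where uw: "V = qspan2 u w"
    "\<forall>a b. of_real (of_rat a) * u + of_real (of_rat b) * w = 0 \<longrightarrow> a = 0 \<and> b = 0"
    using assms(1) unfolding is_space_def by blast
  obtain x y where xy: "x \<in> V" "y \<in> V" "R_indep x y" using assms(1) by (auto simp: is_space_def)
  have 1: "0 \<in> (\<lambda>z. c*z) ` V" using assms(1) unfolding is_space_def by force
  have 2: "\<forall>x\<in>(\<lambda>z. c*z) ` V. \<forall>y\<in>(\<lambda>z. c*z) ` V. x + y \<in> (\<lambda>z. c*z) ` V"
  proof (clarify)
    fix a b assume "a \<in> V" "b \<in> V"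
    then have "a + b \<in> V" using assms(1) unfolding is_space_def by blast
    moreover have "c*a + c*b = c*(a+b)" by (simp add: algebra_simps)
    ultimately show "c*a + c*b \<in> (\<lambda>z. c*z) ` V" by blast
  qed
  have 3: "\<forall>q\<in>\<rat>. \<forall>x\<in>(\<lambda>z. c*z) ` V. q * x \<in> (\<lambda>z. c*z) ` V"
  proof (clarify)
    fix q :: complex and a assume "q \<in> \<rat>" "a \<in> V"
    then have "q * a \<in> V" using assms(1) unfolding is_space_def by blast
    moreover have "q * (c*a) = c * (q*a)" by (simp add: algebra_simps)
    ultimately show "q * (c*a) \<in> (\<lambda>z. c*z) ` V" by blast
  qed
  have 4: "\<forall>a b. of_real (of_rat a) * (c*u) + of_real (of_rat b) * (c*w) = 0 \<longrightarrow> a = 0 \<and> b = 0"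
  proof (intro allI impI)
    fix a b assume "of_real (of_rat a) * (c*u) + of_real (of_rat b) * (c*w) = 0"
    then have "c * (of_real (of_rat a) * u + of_real (of_rat b) * w) = 0" by (simp add: algebra_simps)
    then show "a = 0 \<and> b = 0" using uw(2) assms(2) by simp
  qed
  have 5: "c*x \<in> (\<lambda>z. c*z) ` V" "c*y \<in> (\<lambda>z. c*z) ` V" using xy by auto
  have 6: "(\<lambda>z. c*z) ` V = qspan2 (c*u) (c*w)" using uw(1) qspan2_scale by simp
  show ?thesis unfolding is_space_def
    apply (intro conjI)
        apply (rule 1)
       apply (rule 2)
      apply (rule 3)
     apply (rule exI[of _ "c*u"], rule exI[of _ "c*w"], rule conjI[OF 6 4])
    using 5 R_indep_scale[OF xy(3) assms(2)] by blast
qed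

lemma cayley:
  assumes "\<tau> \<noteq> -1"
  shows "qspan2 1 \<tau> = (\<lambda>z. (1+\<tau>)*z) ` qspan2 1 ((1-\<tau>)/(1+\<tau>))"
proof -
  have ne: "1 + \<tau> \<noteq> 0" using assms by (metis add_eq_0_iff2 add.commute)
  have "(\<lambda>z. (1+\<tau>)*z) ` qspan2 1 ((1-\<tau>)/(1+\<tau>)) = qspan2 (1+\<tau>) (1-\<tau>)"
    using ne by (simp add: qspan2_scale)
  also have "\<dots> = qspan2 1 \<tau>"
  proof
    show "qspan2 (1+\<tau>) (1-\<tau>) \<subseteq> qspan2 1 \<tau>"
    proof (rule qspan2_sub)
      show "1+\<tau> \<in> qspan2 1 \<tau>" unfolding qspan2_mem by (rule exI[of _ 1], rule exI[of _ 1], simp)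
      show "1-\<tau> \<in> qspan2 1 \<tau>" unfolding qspan2_mem by (rule exI[of _ 1], rule exI[of _ "-1"], simp add: of_rat_minus)
    qed
    show "qspan2 1 \<tau> \<subseteq> qspan2 (1+\<tau>) (1-\<tau>)"
    proof (rule qspan2_sub)
      show "1 \<in> qspan2 (1+\<tau>) (1-\<tau>)" unfolding qspan2_mem
        by (rule exI[of _ "1/2"], rule exI[of _ "1/2"], simp add: of_rat_divide field_simps)
      show "\<tau> \<in> qspan2 (1+\<tau>) (1-\<tau>)" unfolding qspan2_mem
        by (rule exI[of _ "1/2"], rule exI[of _ "-1/2"], simp add: of_rat_divide of_rat_minus field_simps)
    qed
  qed
  finally show ?thesis by simp
qed


lemma cayley_re:
  assumes "cmod \<tau> = 1" "\<tau> \<noteq> -1"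
  shows "Re ((1-\<tau>)/(1+\<tau>)) = 0"
proof -
  have n: "Re \<tau> ^ 2 + Im \<tau> ^ 2 = 1" using assms(1) by (simp add: cmod_def)
  have "1 + \<tau> \<noteq> 0" using assms(2) by (metis add_eq_0_iff2 add.commute)
  have "Re (1-\<tau>) * Re (1+\<tau>) + Im (1-\<tau>) * Im (1+\<tau>) = 0"
    using n by (simp add: power2_eq_square algebra_simps)
  then show ?thesis by (simp only: Re_divide)
qed

lemma cayley_ne:
  assumes "(\<tau>::complex) \<noteq> 1" "\<tau> \<noteq> -1" shows "(1-\<tau>)/(1+\<tau>) \<noteq> 0"
proof -
  have "1 + \<tau> \<noteq> 0" using assms(2) by (metis add_eq_0_iff2 add.commute)
  moreover have "1 - \<tau> \<noteq> 0" using assms(1) by (auto simp: complex_eq_iff)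
  ultimately show ?thesis by simp
qed

lemma cayley_mod:
  assumes "Re \<tau> = 0"
  shows "cmod ((1-\<tau>)/(1+\<tau>)) = 1"
proof -
  have "cmod (1-\<tau>) = cmod (1+\<tau>)" using assms by (simp add: cmod_def)
  moreover have "1 + \<tau> \<noteq> 0" using assms by (auto simp: complex_eq_iff)
  ultimately show ?thesis by (simp add: norm_divide)
qed

lemma cnj_qspan2:
  assumes "Re \<tau> = 0"
  shows "cnj ` qspan2 1 \<tau> = qspan2 1 \<tau>"
proof -
  have ct: "cnj \<tau> = - \<tau>" using assms by (simp add: complex_eq_iff)
  have sub: "cnj z \<in> qspan2 1 \<tau>" if "z \<in> qspan2 1 \<tau>" for z
  proof -
    have "\<exists>a b. z = of_real (of_rat a) * 1 + of_real (of_rat b) * \<tau>" using that by (simp only: qspan2_mem)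
    then obtain a b where "z = of_real (of_rat a) * 1 + of_real (of_rat b) * \<tau>" by blast
    then have "cnj z = of_real (of_rat a) * 1 + of_real (of_rat (-b)) * \<tau>" by (simp add: ct of_rat_minus)
    then show ?thesis by (auto simp: qspan2_mem)
  qed
  show ?thesis
  proof
    show "cnj ` qspan2 1 \<tau> \<subseteq> qspan2 1 \<tau>" using sub by blast
    show "qspan2 1 \<tau> \<subseteq> cnj ` qspan2 1 \<tau>"
    proof
      fix z assume "z \<in> qspan2 1 \<tau>"
      then have "cnj z \<in> qspan2 1 \<tau>" by (rule sub)
      then show "z \<in> cnj ` qspan2 1 \<tau>" by (rule image_eqI[rotated]) simp
    qed
  qed
qed



lemma conj_space_form:
  assumes sp: "is_space V'" and cj: "cnj ` V' = V'"
  shows "\<exists>\<tau>. \<tau> \<noteq> 0 \<and> Re \<tau> = 0 \<and> (\<exists>a. a \<noteq> 0 \<and> V' = (\<lambda>z. a*z) ` qspan2 1 \<tau>)"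
proof -
  obtain u w where uw: "V' = qspan2 u w" using sp unfolding is_space_def by blast
  obtain x y where xy: "x \<in> V'" "y \<in> V'" "R_indep x y" using sp by (auto simp: is_space_def)
  have add: "p + q \<in> V'" if "p \<in> V'" "q \<in> V'" for p q using sp that unfolding is_space_def by blast
  have smul: "r * p \<in> V'" if "r \<in> \<rat>" "p \<in> V'" for r p using sp that unfolding is_space_def by blast
  have cnjV: "cnj p \<in> V'" if "p \<in> V'" for p using cj that by blast
  obtain z1 where z1: "z1 \<in> V'" "Re z1 \<noteq> 0" using xy imag_dep by blast
  obtain z2 where z2: "z2 \<in> V'" "Im z2 \<noteq> 0" using xy real_dep by blast
  define a where "a = complex_of_real (Re z1)"
  define b where "b = \<i> * complex_of_real (Im z2)"
  have aeq: "a = (1/2) * (z1 + cnj z1)" unfolding a_def by (simp add: complex_eq_iff)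
  have h2: "(1/2::complex) \<in> \<rat>" by (intro Rats_divide) simp_all
  have "z1 + cnj z1 \<in> V'" using add cnjV z1(1) by blast
  then have "(1/2) * (z1 + cnj z1) \<in> V'" using smul h2 by blast
  then have aV: "a \<in> V'" using aeq by (simp only:)
  have "b = (1/2) * (z2 + (-1) * cnj z2)" unfolding b_def by (simp add: complex_eq_iff)
  moreover have "(-1::complex) \<in> \<rat>" by simp
  ultimately have bV: "b \<in> V'" using add smul cnjV z2(1) by (metis Rats_divide Rats_1 Rats_number_of)
  have a0: "a \<noteq> 0" "Im a = 0" "Re a \<noteq> 0" using z1 unfolding a_def by auto
  have b0: "b \<noteq> 0" "Re b = 0" "Im b \<noteq> 0" using z2 unfolding b_def by auto
  obtain p1 q1 where a: "a = of_real (of_rat p1) * u + of_real (of_rat q1) * w" using aV uw by (auto simp: qspan2_mem)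
  obtain p2 q2 where b: "b = of_real (of_rat p2) * u + of_real (of_rat q2) * w" using bV uw by (auto simp: qspan2_mem)
  define D where "D = p1 * q2 - q1 * p2"
  have e1: "of_real (of_rat q2) * a - of_real (of_rat q1) * b = of_real (of_rat D) * u"
    unfolding a b D_def by (simp add: of_rat_mult of_rat_diff algebra_simps)
  have e2: "of_real (of_rat p2) * a - of_real (of_rat p1) * b = - of_real (of_rat D) * w"
    unfolding a b D_def by (simp add: of_rat_mult of_rat_diff algebra_simps)
  have D0: "D \<noteq> 0"
  proof
    assume "D = 0"
    then have f1: "of_real (of_rat q2) * a = of_real (of_rat q1) * b"
      and f2: "of_real (of_rat p2) * a = of_real (of_rat p1) * b" using e1 e2 by auto
    from f1 have "of_rat q2 * Re a = 0" "of_rat q1 * Im b = 0"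
      using a0 b0 by (simp_all add: complex_eq_iff)
    then have "q1 = 0" "q2 = 0" using a0 b0 by simp_all
    from f2 have "of_rat p2 * Re a = 0" "of_rat p1 * Im b = 0"
      using a0 b0 by (simp_all add: complex_eq_iff)
    then have "p1 = 0" "p2 = 0" using a0 b0 by simp_all
    then show False using a a0 \<open>q1 = 0\<close> by simp
  qed
  have "u = of_real (of_rat (q2/D)) * a + of_real (of_rat (-q1/D)) * b"
  proof -
    have "of_real (of_rat D) * u = of_real (of_rat D) * (of_real (of_rat (q2/D)) * a + of_real (of_rat (-q1/D)) * b)"
      using e1 D0 by (simp add: of_rat_divide of_rat_minus field_simps)
    then show ?thesis using D0 by simp
  qed
  then have uS: "u \<in> qspan2 a b" by (auto simp: qspan2_mem)
  have "w = of_real (of_rat (-p2/D)) * a + of_real (of_rat (p1/D)) * b"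
  proof -
    have Dc: "complex_of_real (of_rat D) \<noteq> 0" using D0 by simp
    have "of_real (of_rat D) * w = of_real (of_rat p1) * b - of_real (of_rat p2) * a"
      using e2 by (simp add: algebra_simps)
    then have "w = (of_real (of_rat p1) * b - of_real (of_rat p2) * a) / of_real (of_rat D)"
      using Dc by (simp add: eq_divide_eq mult.commute)
    also have "\<dots> = of_real (of_rat (-p2/D)) * a + of_real (of_rat (p1/D)) * b"
      using Dc by (simp add: of_rat_divide of_rat_minus diff_divide_distrib)
    finally show ?thesis .
  qed
  then have wS: "w \<in> qspan2 a b" by (auto simp: qspan2_mem)
  have "V' = qspan2 a b"
    using qspan2_sub[OF uS wS] qspan2_sub[of a u w b] aV bV uw by auto
  also have "\<dots> = (\<lambda>z. a*z) ` qspan2 1 (b/a)" using a0 by (simp add: qspan2_scale)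
  finally have "V' = (\<lambda>z. a*z) ` qspan2 1 (b/a)" .
  moreover have "b/a \<noteq> 0" "Re (b/a) = 0" using a0 b0 by (simp_all add: Re_divide)
  ultimately show ?thesis using a0 by blast
qed


theorem lemma4p1:
  assumes "is_space V"
  shows "((\<exists>\<tau>. cmod \<tau> = 1 \<and> homothetic V (qspan2 1 \<tau>)) \<longleftrightarrow>
          (\<exists>\<tau>. \<tau> \<noteq> 0 \<and> Re \<tau> = 0 \<and> homothetic V (qspan2 1 \<tau>))) \<and>
         ((\<exists>\<tau>. \<tau> \<noteq> 0 \<and> Re \<tau> = 0 \<and> homothetic V (qspan2 1 \<tau>)) \<longleftrightarrow>
          (\<exists>V'. is_space V' \<and> homothetic V V' \<and> cnj ` V' = V'))"
proof -
  have A: "\<exists>\<sigma>. \<sigma> \<noteq> 0 \<and> Re \<sigma> = 0 \<and> homothetic V (qspan2 1 \<sigma>)"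
    if "cmod \<tau> = 1" "homothetic V (qspan2 1 \<tau>)" for \<tau>
  proof -
    have im: "Im \<tau> \<noteq> 0" using homothetic_Im[OF assms that(2)] .
    have n1: "\<tau> \<noteq> -1" "\<tau> \<noteq> 1" using im by auto
    have ne: "1 + \<tau> \<noteq> 0" using im by (auto simp: complex_eq_iff)
    have "homothetic V (qspan2 1 ((1-\<tau>)/(1+\<tau>)))"
      using homothetic_trans_scale[OF that(2) cayley[OF n1(1)] ne] .
    moreover have "(1-\<tau>)/(1+\<tau>) \<noteq> 0" using cayley_ne[OF n1(2) n1(1)] .
    moreover have "Re ((1-\<tau>)/(1+\<tau>)) = 0" using cayley_re[OF that(1) n1(1)] .
    ultimately show ?thesis by blast
  qed
  have B: "\<exists>\<sigma>. cmod \<sigma> = 1 \<and> homothetic V (qspan2 1 \<sigma>)"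
    if "\<tau> \<noteq> 0" "Re \<tau> = 0" "homothetic V (qspan2 1 \<tau>)" for \<tau>
  proof -
    have n1: "\<tau> \<noteq> -1" using that(2) by auto
    have ne: "1 + \<tau> \<noteq> 0" using that(2) by (auto simp: complex_eq_iff)
    have "homothetic V (qspan2 1 ((1-\<tau>)/(1+\<tau>)))"
      using homothetic_trans_scale[OF that(3) cayley[OF n1] ne] .
    moreover have "cmod ((1-\<tau>)/(1+\<tau>)) = 1" using cayley_mod[OF that(2)] .
    ultimately show ?thesis by blast
  qed
  have C: "\<exists>V'. is_space V' \<and> homothetic V V' \<and> cnj ` V' = V'"
    if h: "\<tau> \<noteq> 0" "Re \<tau> = 0" "homothetic V (qspan2 1 \<tau>)" for \<tau>
  proof -
    obtain c where c: "c \<noteq> 0" "qspan2 1 \<tau> = (\<lambda>z. c*z) ` V" using h(3) by (auto simp: homothetic_def)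
    have "is_space (qspan2 1 \<tau>)" using is_space_scale[OF assms c(1)] c(2) by simp
    then show ?thesis using h(3) cnj_qspan2[OF h(2)] by blast
  qed
  have D: "\<exists>\<tau>. \<tau> \<noteq> 0 \<and> Re \<tau> = 0 \<and> homothetic V (qspan2 1 \<tau>)"
    if h: "is_space V'" "homothetic V V'" "cnj ` V' = V'" for V'
  proof -
    obtain \<tau> a where t: "\<tau> \<noteq> 0" "Re \<tau> = 0" "a \<noteq> 0" "V' = (\<lambda>z. a*z) ` qspan2 1 \<tau>"
      using conj_space_form[OF h(1) h(3)] by blast
    have "homothetic V (qspan2 1 \<tau>)" using homothetic_trans_scale[OF h(2) t(4) t(3)] .
    then show ?thesis using t by blast
  qed
  show ?thesis using A B C D by blast
qed

end
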